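(* Let $(s_n)$ be a sequence of nonnegative reals and $D\in\mathbb{N}\setminus\{0\}$ with $s_n\leq D$ for all $n$. Let $(\alpha_n)\subset\,]0,1[$, $(r_n),(v_n)\subset\mathbb{R}$, $(\gamma_n)\subset[0,\infty)$, and let ${\rm A}:\mathbb{N}\to\mathbb{N}$ be monotone with $\sum_{i=0}^{{\rm A}(k)}\alpha_i\geq k$ for all $k\in\mathbb{N}$. Let $k,n,p\in\mathbb{N}$ and assume (i) $\forall m\in[n,p]\ \big(v_m\leq\frac{1}{4(k+1)(p+1)}\ \wedge\ r_m\leq\frac{1}{4(k+1)}\big)$; (ii) $\forall m\in\mathbb{N}\ \big(\sum_{i=n}^{n+m}\gamma_i\leq\frac{1}{4(k+1)}\big)$; (iii) $\forall m\in\mathbb{N}\ \big(s_{m+1}\leq(1-\alpha_m)(s_m+v_m)+\alpha_m r_m+\gamma_m\big)$. Then $s_m\leq\frac{1}{k+1}$ for all $m\in[\sigma_1(k,n),p]$, where $\sigma_1(k,n):={\rm A}\big(n+\lceil\ln(4D(k+1))\rceil\big)+1$.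
   Context: A function $f:\mathbb{N}\to\mathbb{N}$ is monotone if $f(n)\leq f(n+1)$ for all $n$. $[a,b]$ denotes the set of natural numbers $m$ with $a\leq m\leq b$ (empty if $a>b$). *)

theory Defs
  imports Complex_Main
begin

text \<open>sigma_1(k,n) := A(n + ceil(ln(4 D (k+1)))) + 1. The ceiling is nonnegative since
  4 D (k+1) \<ge> 4 > 1 for D \<ge> 1, so converting it to nat via nat loses nothing.\<close>
definition sigma1 :: "(nat \<Rightarrow> nat) \<Rightarrow> nat \<Rightarrow> nat \<Rightarrow> nat \<Rightarrow> nat" where
  "sigma1 A D k n = A (n + nat \<lceil>ln (4 * real D * (real k + 1))\<rceil>) + 1"

end

theory Submission
  imports Defs
begin

theorem mainTheorem5:
  fixes s alpha r v gamma :: "nat \<Rightarrow> real"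
    and A :: "nat \<Rightarrow> nat" and D k n p :: nat
  assumes s_nonneg: "\<And>m. s m \<ge> 0"
    and D_pos: "D \<noteq> 0"
    and s_le_D: "\<And>m. s m \<le> real D"
    and alpha_range: "\<And>m. 0 < alpha m \<and> alpha m < 1"
    and gamma_nonneg: "\<And>m. gamma m \<ge> 0"
    and A_mono: "\<And>m. A m \<le> A (Suc m)"
    and A_rate: "\<And>j. (\<Sum>i=0..A j. alpha i) \<ge> real j"
    and hi: "\<And>m. n \<le> m \<Longrightarrow> m \<le> p \<Longrightarrow>
               v m \<le> 1 / (4 * (real k + 1) * (real p + 1)) \<and> r m \<le> 1 / (4 * (real k + 1))"
    and hii: "\<And>m. (\<Sum>i=n..n+m. gamma i) \<le> 1 / (4 * (real k + 1))"
    and hiii: "\<And>m. s (m + 1) \<le> (1 - alpha m) * (s m + v m) + alpha m * r m + gamma m"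
  shows "\<forall>m. sigma1 A D k n \<le> m \<and> m \<le> p \<longrightarrow> s m \<le> 1 / (real k + 1)"
proof (intro allI impI)
  fix m assume hm: "sigma1 A D k n \<le> m \<and> m \<le> p"
  define q where "q = 1 / (4 * (real k + 1))"
  have q_pos: "q > 0" unfolding q_def by simp
  define W where "W i = max (s i - q) 0" for i
  define c where "c i = max (v i) 0 + gamma i" for i
  have c_nonneg: "c i \<ge> 0" for i unfolding c_def using gamma_nonneg[of i] by simp
  have step: "W (i+1) \<le> (1 - alpha i) * W i + c i" if "n \<le> i" "i \<le> p" for i
  proof -
    have a: "0 < alpha i" "alpha i < 1" using alpha_range[of i] by auto
    have r: "r i \<le> q" using hi[OF that] unfolding q_def by simp
    have "s (i+1) - q \<le> (1 - alpha i) * (s i - q) + (1 - alpha i) * v i + alpha i * (r i - q) + gamma i"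
      using hiii[of i] by (simp add: algebra_simps)
    also have "alpha i * (r i - q) \<le> 0" using a r by (simp add: mult_nonneg_nonpos)
    also have "(1 - alpha i) * v i \<le> max (v i) 0"
    proof (cases "v i \<ge> 0")
      case True then show ?thesis using a mult_left_le_one_le[of "v i" "1 - alpha i"] by auto
    next
      case False then show ?thesis using a by (simp add: mult_nonneg_nonpos)
    qed
    also have "(1 - alpha i) * (s i - q) \<le> (1 - alpha i) * W i"
      using a by (intro mult_left_mono) (auto simp: W_def)
    finally have "s (i+1) - q \<le> (1 - alpha i) * W i + c i" by (simp add: c_def)
    moreover have "0 \<le> (1 - alpha i) * W i + c i"
      using a c_nonneg[of i] by (simp add: W_def)
    ultimately show ?thesis by (simp add: W_def)
  qed
  have ind: "n + j \<le> p + 1 \<longrightarrow> W (n+j) \<le> exp (- (\<Sum>i=n..<n+j. alpha i)) * real D + (\<Sum>i=n..<n+j. c i)" for j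
  proof (induction j)
    case 0
    then show ?case using s_le_D[of n] q_pos by (simp add: W_def)
  next
    case (Suc j)
    show ?case
    proof
      assume h: "n + Suc j \<le> p + 1"
      let ?E = "exp (- (\<Sum>i=n..<n+j. alpha i))"
      let ?C = "\<Sum>i=n..<n+j. c i"
      have IH: "W (n+j) \<le> ?E * real D + ?C" using Suc h by simp
      have a: "0 < alpha (n+j)" "alpha (n+j) < 1" using alpha_range[of "n+j"] by auto
      have C0: "?C \<ge> 0" using c_nonneg by (simp add: sum_nonneg)
      have "W (n + Suc j) \<le> (1 - alpha (n+j)) * W (n+j) + c (n+j)"
        using step[of "n+j"] h by simp
      also have "\<dots> \<le> (1 - alpha (n+j)) * (?E * real D + ?C) + c (n+j)"
        using a IH by (intro add_right_mono mult_left_mono) auto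
      also have "\<dots> = (1 - alpha (n+j)) * ?E * real D + (1 - alpha (n+j)) * ?C + c (n+j)"
        by (simp add: algebra_simps)
      also have "(1 - alpha (n+j)) * ?C \<le> ?C"
        using a C0 mult_left_le_one_le[of ?C "1 - alpha (n+j)"] by auto
      also have "(1 - alpha (n+j)) * ?E \<le> exp (- alpha (n+j)) * ?E"
        by (intro mult_right_mono) (auto simp: exp_ge_add_one_self[of "- alpha (n+j)", simplified] add_le_cancel_left)
      also have "exp (- alpha (n+j)) * ?E = exp (- (\<Sum>i=n..<n+Suc j. alpha i))"
        by (simp add: exp_add[symmetric])
      finally show "W (n + Suc j) \<le> exp (- (\<Sum>i=n..<n+Suc j. alpha i)) * real D + (\<Sum>i=n..<n+Suc j. c i)"
        by (simp add: add.assoc mult_right_mono)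
    qed
  qed
  define L where "L = ln (4 * real D * (real k + 1))"
  define N where "N = n + nat \<lceil>L\<rceil>"
  have mA: "A N + 1 \<le> m" using hm unfolding sigma1_def N_def L_def by simp
  have sub: "{0..A N} \<subseteq> {0..<m}" using mA by auto
  have aS0: "(\<Sum>i=0..A N. alpha i) \<le> (\<Sum>i=0..<m. alpha i)"
    by (rule sum_mono2[OF _ sub]) (use alpha_range in \<open>auto intro: less_imp_le\<close>)
  have le_card: "(\<Sum>i=0..<t. alpha i) \<le> real t" for t
  proof -
    have "(\<Sum>i=0..<t. alpha i) \<le> (\<Sum>i=0..<t. 1)"
      by (rule sum_mono) (use alpha_range in \<open>auto intro: less_imp_le\<close>)
    then show ?thesis by simp
  qed
  have NS: "real N \<le> (\<Sum>i=0..<m. alpha i)" using A_rate[of N] aS0 by linarith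
  have "real N \<le> real m" using NS le_card[of m] by linarith
  then have nm: "n \<le> m" unfolding N_def by simp
  obtain j where j: "m = n + j" using nm le_Suc_ex by blast
  have split: "(\<Sum>i=0..<m. alpha i) = (\<Sum>i=0..<n. alpha i) + (\<Sum>i=n..<n+j. alpha i)"
    using j sum.atLeastLessThan_concat[of 0 n "n+j" alpha] by simp
  have SL: "L \<le> (\<Sum>i=n..<n+j. alpha i)"
  proof -
    have "L \<le> real (nat \<lceil>L\<rceil>)" by linarith
    also have "\<dots> = real N - real n" unfolding N_def by simp
    also have "\<dots> \<le> (\<Sum>i=n..<n+j. alpha i)" using NS split le_card[of n] by linarith
    finally show ?thesis .
  qed
  have Dpos: "real D > 0" using D_pos by simp
  have E: "exp (- (\<Sum>i=n..<n+j. alpha i)) * real D \<le> q"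
  proof -
    have "exp (- (\<Sum>i=n..<n+j. alpha i)) \<le> exp (- L)" using SL by simp
    also have "exp (- L) = 1 / (4 * real D * (real k + 1))"
      unfolding L_def using Dpos by (simp add: exp_minus divide_simps add_pos_nonneg)
    finally have "exp (- (\<Sum>i=n..<n+j. alpha i)) * real D \<le> 1 / (4 * real D * (real k + 1)) * real D"
      by (rule mult_right_mono) (use Dpos in auto)
    also have "\<dots> = q" unfolding q_def using Dpos by simp
    finally show ?thesis .
  qed
  have jp: "j \<le> p" using hm j by simp
  have Cv: "(\<Sum>i=n..<n+j. max (v i) 0) \<le> q"
  proof -
    have "(\<Sum>i=n..<n+j. max (v i) 0) \<le> (\<Sum>i=n..<n+j. q / (real p + 1))"
    proof (rule sum_mono)
      fix i assume "i \<in> {n..<n+j}"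
      then have "n \<le> i" "i \<le> p" using hm j by auto
      then have "v i \<le> q / (real p + 1)" using hi[of i] unfolding q_def by simp
      moreover have "0 \<le> q / (real p + 1)" using q_pos by simp
      ultimately show "max (v i) 0 \<le> q / (real p + 1)" by simp
    qed
    also have "\<dots> = real j * (q / (real p + 1))" by simp
    also have "\<dots> \<le> (real p + 1) * (q / (real p + 1))"
      using jp q_pos by (intro mult_right_mono) auto
    also have "\<dots> = q" by simp
    finally show ?thesis .
  qed
  have Cg: "(\<Sum>i=n..<n+j. gamma i) \<le> q"
  proof (cases j)
    case 0 then show ?thesis using q_pos by simp
  next
    case (Suc j')
    then have "{n..<n+j} = {n..n+j'}" by auto
    then show ?thesis using hii[of j'] unfolding q_def by simp
  qed
  have Csum: "(\<Sum>i=n..<n+j. c i) \<le> 2 * q"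
    using Cv Cg unfolding c_def by (simp add: sum.distrib)
  have "W (n+j) \<le> exp (- (\<Sum>i=n..<n+j. alpha i)) * real D + (\<Sum>i=n..<n+j. c i)"
    using ind[of j] hm j by simp
  then have "W m \<le> 3 * q" using E Csum j by simp
  then have "s m \<le> 4 * q" unfolding W_def by simp
  then show "s m \<le> 1 / (real k + 1)" unfolding q_def by (simp add: divide_simps algebra_simps)
qed

end
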